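(* Let $r>0$, $d>0$ with $d\sqrt{2}<r$, and let $X\subseteq\mathbb{R}^2$ be a bounded $r$-regular set whose boundary contains no point of $d\mathbb{Z}^2$. Let $C$ be a grey pixel of the lattice $d\mathbb{Z}^2$ having two direct neighbour pixels (pixels sharing a side with $C$) which share a vertex with each other and which are either both black or both white. Let $p$ be the vertex of $C$ that belongs to neither of these two neighbour pixels. If $q\in\partial X\cap C$, then $q\in B_d(p)$, the open ball of radius $d$ centred at $p$.
   Context: A closed set $X\subseteq\mathbb{R}^2$ is $r$-regular if for each $x\in\partial X$ there are two open balls of radius $r$, $B_r(x_b)\subseteq X$ and $B_r(x_w)\subseteq \mathbb{R}^2\setminus X$, with $\overline{B_r(x_b)}\cap\overline{B_r(x_w)}=\{x\}$. Pixels are the closed squares $[dk,d(k+1)]\times[dl,d(l+1)]$, $k,l\in\mathbb{Z}$. A pixel $P$ is black if $\mathrm{area}(X\cap P)=d^2$, white if $\mathrm{area}(X\cap P)=0$, and grey otherwise. *)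

theory Defs
  imports "HOL-Analysis.Analysis"
begin

text \<open>Points of the plane are pairs of reals (Euclidean metric on real \<times> real).\<close>

definition r_regular :: "real \<Rightarrow> (real \<times> real) set \<Rightarrow> bool" where
  "r_regular r X \<longleftrightarrow> closed X \<and>
     (\<forall>x\<in>frontier X. \<exists>xb xw. ball xb r \<subseteq> X \<and> ball xw r \<subseteq> - X \<and>
         cball xb r \<inter> cball xw r = {x})"

definition pixel :: "real \<Rightarrow> int \<Rightarrow> int \<Rightarrow> (real \<times> real) set" where
  "pixel d k l = {d * of_int k .. d * (of_int k + 1)} \<times> {d * of_int l .. d * (of_int l + 1)}"

definition pixel_vertices :: "real \<Rightarrow> int \<Rightarrow> int \<Rightarrow> (real \<times> real) set" where
  "pixel_vertices d k l = {(d * of_int k, d * of_int l), (d * (of_int k + 1), d * of_int l),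
                          (d * of_int k, d * (of_int l + 1)), (d * (of_int k + 1), d * (of_int l + 1))}"

definition black_pixel :: "(real \<times> real) set \<Rightarrow> real \<Rightarrow> int \<Rightarrow> int \<Rightarrow> bool" where
  "black_pixel X d k l \<longleftrightarrow> measure lebesgue (X \<inter> pixel d k l) = d\<^sup>2"

definition white_pixel :: "(real \<times> real) set \<Rightarrow> real \<Rightarrow> int \<Rightarrow> int \<Rightarrow> bool" where
  "white_pixel X d k l \<longleftrightarrow> measure lebesgue (X \<inter> pixel d k l) = 0"

definition grey_pixel :: "(real \<times> real) set \<Rightarrow> real \<Rightarrow> int \<Rightarrow> int \<Rightarrow> bool" where
  "grey_pixel X d k l \<longleftrightarrow> \<not> black_pixel X d k l \<and> \<not> white_pixel X d k l"

definition direct_neighbour :: "int \<Rightarrow> int \<Rightarrow> int \<Rightarrow> int \<Rightarrow> bool" where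
  "direct_neighbour k l k' l' \<longleftrightarrow> \<bar>k' - k\<bar> + \<bar>l' - l\<bar> = 1"

end

theory Submission
  imports Defs
begin

lemma core:
  fixes d r a b cx cy :: real
  assumes d: "d>0" and r: "2*d^2 < r^2" and a: "0\<le>a" "a\<le>d" and b: "0\<le>b" "b\<le>d"
    and ab: "d^2 \<le> a^2+b^2" and n1: "\<not>(a=d \<and> b=0)" and n2: "\<not>(a=0 \<and> b=d)"
    and c: "(cx-a)^2+(cy-b)^2 = r^2"
  shows "\<exists>x y. (cx-x)^2+(cy-y)^2 < r^2 \<and> ((d\<le>x\<and>x\<le>2*d\<and>0\<le>y\<and>y\<le>d) \<or> (0\<le>x\<and>x\<le>d\<and>d\<le>y\<and>y\<le>2*d))"
proof -
  have a0: "a > 0"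
  proof (rule ccontr)
    assume "\<not> a > 0" then have "a = 0" using a by simp
    then have "d^2 \<le> b^2" using ab by simp
    then have "d \<le> b" using b(1) by (rule power2_le_imp_le)
    then show False using n2 \<open>a=0\<close> b by simp
  qed
  have b0: "b > 0"
  proof (rule ccontr)
    assume "\<not> b > 0" then have "b = 0" using b by simp
    then have "d^2 \<le> a^2" using ab by simp
    then have "d \<le> a" using a(1) by (rule power2_le_imp_le)
    then show False using n1 \<open>b=0\<close> a by simp
  qed
  define ux where "ux = cx - a"
  define uy where "uy = cy - b"
  show ?thesis
  proof (cases "ux > (d-a)/2")
    case True
    define s where "s = max (d-a) (min d ux)"
    have s1: "d - a \<le> s" "s \<le> 2*d - a" using a d unfolding s_def by auto
    have s2: "0 < s" "s < 2*ux" using True a0 a d unfolding s_def by auto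
    have "s*(s - 2*ux) < 0" using s2 by (simp add: mult_pos_neg)
    moreover have "(cx-(a+s))^2 = (cx-a)^2 + s*(s-2*ux)" unfolding ux_def
      by (simp add: power2_eq_square algebra_simps)
    ultimately have "(cx-(a+s))^2+(cy-b)^2 < r^2" using c by linarith
    then show ?thesis using s1 b by (intro exI[of _ "a+s"] exI[of _ b]) auto
  next
    case F1: False
    show ?thesis
    proof (cases "uy > (d-b)/2")
      case True
      define s where "s = max (d-b) (min d uy)"
      have s1: "d - b \<le> s" "s \<le> 2*d - b" using b d unfolding s_def by auto
      have s2: "0 < s" "s < 2*uy" using True b0 b d unfolding s_def by auto
      have "s*(s - 2*uy) < 0" using s2 by (simp add: mult_pos_neg)
      moreover have "(cy-(b+s))^2 = (cy-b)^2 + s*(s-2*uy)" unfolding uy_def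
        by (simp add: power2_eq_square algebra_simps)
      ultimately have "(cx-a)^2+(cy-(b+s))^2 < r^2" using c by linarith
      then show ?thesis using s1 a by (intro exI[of _ a] exI[of _ "b+s"]) auto
    next
      case F2: False
      have "(cx-d)^2+(cy-0)^2 - ((cx-a)^2+(cy-b)^2) = d^2 - (a^2+b^2) - 2*(cx*(d-a) - cy*b)"
        by (simp add: power2_eq_square algebra_simps)
      then have e1: "(cx-d)^2+(cy-0)^2 - r^2 \<le> -2*(cx*(d-a) - cy*b)"
        using c ab by linarith
      have "(cx-0)^2+(cy-d)^2 - ((cx-a)^2+(cy-b)^2) = d^2 - (a^2+b^2) - 2*(cy*(d-b) - cx*a)"
        by (simp add: power2_eq_square algebra_simps)
      then have e2: "(cx-0)^2+(cy-d)^2 - r^2 \<le> -2*(cy*(d-b) - cx*a)"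
        using c ab by linarith
      have T: "cx*(d-a) - cy*b > 0 \<or> cy*(d-b) - cx*a > 0"
      proof (cases "cx \<ge> 0")
        case cx: True
        show ?thesis
        proof (cases "cy \<ge> 0")
          case cy: True
          have "-d \<le> ux" "ux \<le> d" using cx F1 a unfolding ux_def by auto
          then have "\<bar>ux\<bar> \<le> \<bar>d\<bar>" by linarith
          then have "ux^2 \<le> d^2" by (simp add: abs_le_square_iff)
          have "-d \<le> uy" "uy \<le> d" using cy F2 b unfolding uy_def by auto
          then have "\<bar>uy\<bar> \<le> \<bar>d\<bar>" by linarith
          then have "uy^2 \<le> d^2" by (simp add: abs_le_square_iff)
          have "ux^2+uy^2 = r^2" using c unfolding ux_def uy_def by simp
          then have False using \<open>ux^2 \<le> d^2\<close> \<open>uy^2 \<le> d^2\<close> r by simp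
          then show ?thesis ..
        next
          case cy: False
          have "cx*(d-a) \<ge> 0" using cx a by simp
          moreover have "cy*b < 0" using cy b0 by (simp add: mult_neg_pos)
          ultimately show ?thesis by simp
        qed
      next
        case cx: False
        show ?thesis
        proof (cases "cy \<ge> 0")
          case cy: True
          have "cy*(d-b) \<ge> 0" using cy b by simp
          moreover have "cx*a < 0" using cx a0 by (simp add: mult_neg_pos)
          ultimately show ?thesis by simp
        next
          case cy: False
          show ?thesis
          proof (rule ccontr)
            assume "\<not> ?thesis"
            then have h1: "(-cy)*b \<le> (-cx)*(d-a)" and h2: "(-cx)*a \<le> (-cy)*(d-b)" by auto
            have "((-cy)*b)*((-cx)*a) \<le> ((-cx)*(d-a))*((-cy)*(d-b))"
              by (rule mult_mono) (use h1 h2 cx cy a0 b0 a b in \<open>auto intro: mult_nonpos_nonneg\<close>)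
            then have "(cx*cy)*(a*b) \<le> (cx*cy)*((d-a)*(d-b))" by (simp add: algebra_simps)
            moreover have "cx*cy > 0" using cx cy by (simp add: mult_neg_neg)
            ultimately have "a*b \<le> (d-a)*(d-b)" using mult_le_cancel_left_pos by blast
            then have "d*(a+b) \<le> d*d" by (simp add: algebra_simps)
            then have s: "a + b \<le> d" using d by simp
            have "a*a \<le> a*d" by (rule mult_left_mono) (use a in auto)
            moreover have "b*b \<le> b*d" by (rule mult_left_mono) (use b in auto)
            moreover have "(a+b)*d \<le> d*d" by (rule mult_right_mono) (use s d in auto)
            moreover have "d*d \<le> a*a+b*b" using ab by (simp add: power2_eq_square)
            moreover have "(a+b)*d = a*d+b*d" by (simp add: distrib_right)
            ultimately have "a*a = a*d" by linarith
            then have "a = d" using a0 by simp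
            then show False using s b0 by simp
          qed
        qed
      qed
      then show ?thesis
      proof
        assume "cx*(d-a) - cy*b > 0"
        then have "(cx-d)^2+(cy-0)^2 < r^2" using e1 by simp
        then show ?thesis using d by (intro exI[of _ d] exI[of _ 0]) auto
      next
        assume "cy*(d-b) - cx*a > 0"
        then have "(cx-0)^2+(cy-d)^2 < r^2" using e2 by simp
        then show ?thesis using d by (intro exI[of _ 0] exI[of _ d]) auto
      qed
    qed
  qed
qed


definition ivs :: "int \<Rightarrow> int \<Rightarrow> (int \<times> int) set" where
  "ivs k l = {(k,l),(k+1,l),(k,l+1),(k+1,l+1)}"

lemma pv_image: "pixel_vertices d k l = (\<lambda>(i,j). (d * of_int i, d * of_int j)) ` ivs k l"
  unfolding pixel_vertices_def ivs_def by auto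

lemma V_inj: "(d::real) \<noteq> 0 \<Longrightarrow> ((d * of_int i, d * of_int j) = (d * of_int i', d * of_int j')) \<longleftrightarrow> (i = i' \<and> j = j')"
  by auto

lemma V_in_pixel: "(d::real) > 0 \<Longrightarrow> (d * of_int i, d * of_int j) \<in> pixel d k l \<longleftrightarrow> (k \<le> i \<and> i \<le> k+1 \<and> l \<le> j \<and> j \<le> l+1)"
proof -
  assume d: "d > 0"
  have "d * of_int k \<le> d * of_int i \<longleftrightarrow> k \<le> i" using d by simp
  moreover have "d * of_int i \<le> d * (of_int k + 1) \<longleftrightarrow> i \<le> k+1"
    using d by (metis mult_le_cancel_left_pos of_int_add of_int_le_iff of_int_1)
  moreover have "d * of_int l \<le> d * of_int j \<longleftrightarrow> l \<le> j" using d by simp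
  moreover have "d * of_int j \<le> d * (of_int l + 1) \<longleftrightarrow> j \<le> l+1"
    using d by (metis mult_le_cancel_left_pos of_int_add of_int_le_iff of_int_1)
  ultimately show ?thesis unfolding pixel_def by auto
qed

lemma int_config:
  fixes k l k1 l1 k2 l2 i j :: int
  assumes "\<bar>k1 - k\<bar> + \<bar>l1 - l\<bar> = 1" "\<bar>k2 - k\<bar> + \<bar>l2 - l\<bar> = 1" "(k1,l1) \<noteq> (k2,l2)"
    and "ivs k1 l1 \<inter> ivs k2 l2 \<noteq> {}" and "(i,j) \<in> ivs k l"
    and "\<not>(k1 \<le> i \<and> i \<le> k1+1 \<and> l1 \<le> j \<and> j \<le> l1+1)"
    and "\<not>(k2 \<le> i \<and> i \<le> k2+1 \<and> l2 \<le> j \<and> j \<le> l2+1)"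
  shows "\<exists>sx sy. (sx = 1 \<or> sx = -1) \<and> (sy = 1 \<or> sy = -1) \<and>
     (((k1,l1) = (k+sx,l) \<and> (k2,l2) = (k,l+sy)) \<or> ((k2,l2) = (k+sx,l) \<and> (k1,l1) = (k,l+sy))) \<and>
     i = (if sx = 1 then k else k+1) \<and> j = (if sy = 1 then l else l+1)"
proof -
  have n1: "(k1,l1) \<in> {(k+1,l),(k-1,l),(k,l+1),(k,l-1)}" using assms(1) by auto
  have n2: "(k2,l2) \<in> {(k+1,l),(k-1,l),(k,l+1),(k,l-1)}" using assms(2) by auto
  have ij: "(i,j) \<in> {(k,l),(k+1,l),(k,l+1),(k+1,l+1)}" using assms(5) unfolding ivs_def .
  have "(\<lambda>sx sy. (((k1,l1) = (k+sx,l) \<and> (k2,l2) = (k,l+sy)) \<or> ((k2,l2) = (k+sx,l) \<and> (k1,l1) = (k,l+sy))) \<and>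
     i = (if sx = 1 then k else k+1) \<and> j = (if sy = 1 then l else l+1)) 1 1 \<or>
   (\<lambda>sx sy. (((k1,l1) = (k+sx,l) \<and> (k2,l2) = (k,l+sy)) \<or> ((k2,l2) = (k+sx,l) \<and> (k1,l1) = (k,l+sy))) \<and>
     i = (if sx = 1 then k else k+1) \<and> j = (if sy = 1 then l else l+1)) 1 (-1) \<or>
   (\<lambda>sx sy. (((k1,l1) = (k+sx,l) \<and> (k2,l2) = (k,l+sy)) \<or> ((k2,l2) = (k+sx,l) \<and> (k1,l1) = (k,l+sy))) \<and>
     i = (if sx = 1 then k else k+1) \<and> j = (if sy = 1 then l else l+1)) (-1) 1 \<or>
   (\<lambda>sx sy. (((k1,l1) = (k+sx,l) \<and> (k2,l2) = (k,l+sy)) \<or> ((k2,l2) = (k+sx,l) \<and> (k1,l1) = (k,l+sy))) \<and>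
     i = (if sx = 1 then k else k+1) \<and> j = (if sy = 1 then l else l+1)) (-1) (-1)"
    using n1 n2 ij assms(3,4,6,7) unfolding ivs_def
    apply -
    apply (elim insertE emptyE)
    apply (simp_all add: algebra_simps)
    done
  then show ?thesis by blast
qed


definition opix :: "real \<Rightarrow> int \<Rightarrow> int \<Rightarrow> (real \<times> real) set" where
  "opix d k l = {d * of_int k <..< d * (of_int k + 1)} \<times> {d * of_int l <..< d * (of_int l + 1)}"

lemma open_opix: "open (opix d k l)"
  unfolding opix_def by (intro open_Times) auto

lemma closure_opix: "d > 0 \<Longrightarrow> closure (opix d k l) = pixel d k l"
  unfolding opix_def pixel_def closure_Times by (simp add: closure_greaterThanLessThan)

lemma opix_sub: "opix d k l \<subseteq> pixel d k l"
  unfolding opix_def pixel_def by auto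

lemma pixel_cbox: "pixel d k l = cbox (d * of_int k, d * of_int l) (d * (of_int k + 1), d * (of_int l + 1))"
  unfolding pixel_def cbox_Pair_eq by simp

lemma measure_pixel: "d > 0 \<Longrightarrow> measure lebesgue (pixel d k l) = d^2"
  unfolding pixel_cbox by (simp add: content_Pair power2_eq_square algebra_simps)

lemma XP_lmeas: "closed X \<Longrightarrow> X \<inter> pixel d k l \<in> lmeasurable"
  by (intro lmeasurable_compact closed_Int_compact) (auto simp: pixel_cbox)

lemma black_avoid:
  assumes d: "d > 0" and X: "closed X" and bl: "black_pixel X d k l"
    and S: "open S" "S \<subseteq> - X"
  shows "S \<inter> opix d k l = {}"
proof (rule ccontr)
  assume ne: "S \<inter> opix d k l \<noteq> {}"
  have P: "pixel d k l \<in> lmeasurable" by (simp add: pixel_cbox)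
  have XP: "X \<inter> pixel d k l \<in> lmeasurable" using XP_lmeas[OF X] .
  have eq: "pixel d k l - X = pixel d k l - X \<inter> pixel d k l" by auto
  have "measure lebesgue (pixel d k l - X \<inter> pixel d k l) = measure lebesgue (pixel d k l) - measure lebesgue (X \<inter> pixel d k l)"
    by (rule measure_Diff) (use P XP in \<open>auto simp: fmeasurable_def\<close>)
  also have "\<dots> = 0" using bl d measure_pixel[OF d] unfolding black_pixel_def by simp
  finally have m0: "measure lebesgue (pixel d k l - X) = 0" using eq by simp
  have "pixel d k l - X \<in> lmeasurable" using P X by (intro fmeasurable_Diff) auto
  then have "negligible (pixel d k l - X)" using m0 negligible_iff_measure by blast
  moreover have "S \<inter> opix d k l \<subseteq> pixel d k l - X" using S opix_sub by blast
  ultimately have "negligible (S \<inter> opix d k l)" using negligible_subset by blast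
  moreover have "open (S \<inter> opix d k l)" using S open_opix by blast
  ultimately show False using ne open_not_negligible by blast
qed

lemma white_avoid:
  assumes d: "d > 0" and X: "closed X" and wh: "white_pixel X d k l"
    and S: "open S" "S \<subseteq> X"
  shows "S \<inter> opix d k l = {}"
proof (rule ccontr)
  assume ne: "S \<inter> opix d k l \<noteq> {}"
  have XP: "X \<inter> pixel d k l \<in> lmeasurable" using XP_lmeas[OF X] .
  then have "negligible (X \<inter> pixel d k l)" using wh negligible_iff_measure unfolding white_pixel_def by blast
  moreover have "S \<inter> opix d k l \<subseteq> X \<inter> pixel d k l" using S opix_sub by blast
  ultimately have "negligible (S \<inter> opix d k l)" using negligible_subset by blast
  moreover have "open (S \<inter> opix d k l)" using S open_opix by blast
  ultimately show False using ne open_not_negligible by blast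
qed


theorem lemma5p1:
  fixes r d :: real and X :: "(real \<times> real) set"
    and k l k1 l1 k2 l2 :: int and p q :: "real \<times> real"
  assumes "r > 0" and "d > 0" and "d * sqrt 2 < r"
    and "bounded X" and "r_regular r X"
    and "\<forall>i j :: int. (d * of_int i, d * of_int j) \<notin> frontier X"
    and "grey_pixel X d k l"
    and "direct_neighbour k l k1 l1" and "direct_neighbour k l k2 l2"
    and "(k1, l1) \<noteq> (k2, l2)"
    and "pixel_vertices d k1 l1 \<inter> pixel_vertices d k2 l2 \<noteq> {}"
    and "(black_pixel X d k1 l1 \<and> black_pixel X d k2 l2) \<or>
         (white_pixel X d k1 l1 \<and> white_pixel X d k2 l2)"
    and "p \<in> pixel_vertices d k l"
    and "p \<notin> pixel d k1 l1" and "p \<notin> pixel d k2 l2"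
    and "q \<in> frontier X \<inter> pixel d k l"
  shows "q \<in> ball p d"
proof (rule ccontr)
  assume nq: "q \<notin> ball p d"
  note d = \<open>d > 0\<close>
  obtain i j where p: "p = (d * of_int i, d * of_int j)" and ij: "(i,j) \<in> ivs k l"
    using assms(13) unfolding pv_image by auto
  have "ivs k1 l1 \<inter> ivs k2 l2 \<noteq> {}"
  proof -
    obtain v where "v \<in> pixel_vertices d k1 l1" "v \<in> pixel_vertices d k2 l2" using assms(11) by blast
    then obtain x1 y1 x2 y2 where "(x1,y1) \<in> ivs k1 l1" "(x2,y2) \<in> ivs k2 l2"
      "(d * of_int x1, d * of_int y1) = (d * of_int x2, d * of_int y2)"
      unfolding pv_image by auto
    then show ?thesis using V_inj[of d] d by auto
  qed
  then obtain sx sy where sx: "sx = 1 \<or> sx = -1" and sy: "sy = 1 \<or> sy = -1"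
    and nb: "((k1,l1) = (k+sx,l) \<and> (k2,l2) = (k,l+sy)) \<or> ((k2,l2) = (k+sx,l) \<and> (k1,l1) = (k,l+sy))"
    and iv: "i = (if sx = 1 then k else k+1)" and jv: "j = (if sy = 1 then l else l+1)"
    using int_config[of k1 k l1 l k2 l2 i j] assms(8,9,10,14,15) ij
    unfolding direct_neighbour_def p by (auto simp: V_in_pixel[OF d])
  have sx2: "sx * sx = 1" using sx by auto
  have sy2: "sy * sy = 1" using sy by auto
  obtain qx qy where q: "q = (qx, qy)" by (cases q)
  have qF: "q \<in> frontier X" and qC: "q \<in> pixel d k l" using assms(16) by auto
  define a where "a = of_int sx * (qx - d * of_int i)"
  define b where "b = of_int sy * (qy - d * of_int j)"
  have a: "0 \<le> a" "a \<le> d"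
    using sx qC unfolding a_def iv q pixel_def by (auto simp: algebra_simps)
  have b: "0 \<le> b" "b \<le> d"
    using sy qC unfolding b_def jv q pixel_def by (auto simp: algebra_simps)
  have sxr: "(of_int sx :: real) * of_int sx = 1" using sx by auto
  have syr: "(of_int sy :: real) * of_int sy = 1" using sy by auto
  have a2: "a^2 = (qx - d * of_int i)^2" unfolding a_def power2_eq_square
    by (metis (no_types, lifting) mult.assoc mult.left_commute mult_1 sxr)
  have b2: "b^2 = (qy - d * of_int j)^2" unfolding b_def power2_eq_square
    by (metis (no_types, lifting) mult.assoc mult.left_commute mult_1 syr)
  have "dist p q \<ge> d" using nq by (simp add: dist_commute)
  then have "d^2 \<le> (dist p q)^2" using d by (simp add: power_mono)
  also have "(dist p q)^2 = a^2 + b^2"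
    unfolding p q dist_Pair_Pair a2 b2 dist_real_def by (simp add: power2_abs power2_commute)
  finally have ab: "d^2 \<le> a^2 + b^2" .
  have qxa: "qx = d * of_int i + of_int sx * a" unfolding a_def
    using sxr by (simp add: algebra_simps)
  have qyb: "qy = d * of_int j + of_int sy * b" unfolding b_def
    using syr by (simp add: algebra_simps)
  have n1: "\<not> (a = d \<and> b = 0)"
  proof
    assume h: "a = d \<and> b = 0"
    then have "q = (d * of_int (i + sx), d * of_int j)" using q qxa qyb by (simp add: algebra_simps)
    then show False using assms(6) qF by metis
  qed
  have n2: "\<not> (a = 0 \<and> b = d)"
  proof
    assume h: "a = 0 \<and> b = d"
    then have "q = (d * of_int i, d * of_int (j + sy))" using q qxa qyb by (simp add: algebra_simps)
    then show False using assms(6) qF by metis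
  qed
  have X: "closed X" using assms(5) unfolding r_regular_def by blast
  obtain c where cq: "dist c q = r"
    and av: "\<And>k' l'. (k',l') \<in> {(k1,l1),(k2,l2)} \<Longrightarrow> ball c r \<inter> opix d k' l' = {}"
  proof -
    obtain xb xw where hb: "ball xb r \<subseteq> X" and hw: "ball xw r \<subseteq> - X"
      and hc: "cball xb r \<inter> cball xw r = {q}"
      using assms(5) qF unfolding r_regular_def by blast
    have qb: "dist xb q \<le> r" and qw: "dist xw q \<le> r" using hc by auto
    from assms(12) show thesis
    proof
      assume bl: "black_pixel X d k1 l1 \<and> black_pixel X d k2 l2"
      have "q \<notin> ball xw r"
      proof
        assume "q \<in> ball xw r"
        moreover have "ball xw r \<inter> closure X = {}"
          using hw open_Int_closure_eq_empty[of "ball xw r" X] by auto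
        moreover have "q \<in> closure X" using qF unfolding frontier_def by auto
        ultimately show False by blast
      qed
      then have "dist xw q = r" using qw by simp
      moreover have "ball xw r \<inter> opix d k' l' = {}" if "(k',l') \<in> {(k1,l1),(k2,l2)}" for k' l'
        using that bl black_avoid[OF d X _ open_ball hw] by auto
      ultimately show thesis using that by blast
    next
      assume wh: "white_pixel X d k1 l1 \<and> white_pixel X d k2 l2"
      have "q \<notin> ball xb r"
      proof
        assume "q \<in> ball xb r"
        then have "q \<in> interior X" using hb interior_maximal[OF hb open_ball] by blast
        then show False using qF unfolding frontier_def by auto
      qed
      then have "dist xb q = r" using qb by simp
      moreover have "ball xb r \<inter> opix d k' l' = {}" if "(k',l') \<in> {(k1,l1),(k2,l2)}" for k' l'
        using that wh white_avoid[OF d X _ open_ball hb] by auto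
      ultimately show thesis using that by blast
    qed
  qed
  obtain cxg cyg where c: "c = (cxg, cyg)" by (cases c)
  define cx where "cx = of_int sx * (cxg - d * of_int i)"
  define cy where "cy = of_int sy * (cyg - d * of_int j)"
  have "cx - a = of_int sx * (cxg - qx)" unfolding cx_def a_def by (simp add: algebra_simps)
  then have ca: "(cx - a)^2 = (cxg - qx)^2" unfolding power2_eq_square
    by (metis (no_types, lifting) mult.assoc mult.left_commute mult_1 sxr)
  have "cy - b = of_int sy * (cyg - qy)" unfolding cy_def b_def by (simp add: algebra_simps)
  then have cb: "(cy - b)^2 = (cyg - qy)^2" unfolding power2_eq_square
    by (metis (no_types, lifting) mult.assoc mult.left_commute mult_1 syr)
  have "sqrt ((cxg - qx)^2 + (cyg - qy)^2) = r"
    using cq unfolding c q dist_Pair_Pair dist_real_def by (simp add: power2_abs)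
  then have cab: "(cx - a)^2 + (cy - b)^2 = r^2" unfolding ca cb
    by (metis add_nonneg_nonneg real_sqrt_pow2 zero_le_power2)
  have "(d * sqrt 2)^2 < r^2" using assms(3) d by (intro power_strict_mono) auto
  then have r2: "2 * d^2 < r^2" by (simp add: power_mult_distrib)
  obtain x y where xy: "(cx-x)^2+(cy-y)^2 < r^2"
    and cases: "(d\<le>x\<and>x\<le>2*d\<and>0\<le>y\<and>y\<le>d) \<or> (0\<le>x\<and>x\<le>d\<and>d\<le>y\<and>y\<le>2*d)"
    using core[OF d r2 a b ab n1 n2 cab] by blast
  define z where "z = (d * of_int i + of_int sx * x, d * of_int j + of_int sy * y)"
  have cxg: "cxg = d * of_int i + of_int sx * cx" unfolding cx_def
    using sxr by (simp add: algebra_simps)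
  have cyg: "cyg = d * of_int j + of_int sy * cy" unfolding cy_def
    using syr by (simp add: algebra_simps)
  have "cxg - fst z = of_int sx * (cx - x)" unfolding z_def cxg by (simp add: algebra_simps)
  then have zx: "(cxg - fst z)^2 = (cx - x)^2" unfolding power2_eq_square
    by (metis (no_types, lifting) mult.assoc mult.left_commute mult_1 sxr)
  have "cyg - snd z = of_int sy * (cy - y)" unfolding z_def cyg by (simp add: algebra_simps)
  then have zy: "(cyg - snd z)^2 = (cy - y)^2" unfolding power2_eq_square
    by (metis (no_types, lifting) mult.assoc mult.left_commute mult_1 syr)
  have "dist c z = sqrt ((cxg - fst z)^2 + (cyg - snd z)^2)"
    unfolding c by (cases z) (simp add: dist_Pair_Pair dist_real_def power2_abs)
  also have "\<dots> < sqrt (r^2)" unfolding zx zy using xy by (rule real_sqrt_less_mono)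
  also have "\<dots> = r" using assms(1) by simp
  finally have zb: "z \<in> ball c r" by simp
  have "\<exists>k' l'. (k',l') \<in> {(k1,l1),(k2,l2)} \<and> z \<in> pixel d k' l'"
    using cases
  proof
    assume h: "d\<le>x\<and>x\<le>2*d\<and>0\<le>y\<and>y\<le>d"
    have "z \<in> pixel d (k+sx) l"
      using sx sy h unfolding z_def pixel_def iv jv by (auto simp: algebra_simps)
    moreover have "(k+sx,l) \<in> {(k1,l1),(k2,l2)}" using nb by auto
    ultimately show ?thesis by blast
  next
    assume h: "0\<le>x\<and>x\<le>d\<and>d\<le>y\<and>y\<le>2*d"
    have "z \<in> pixel d k (l+sy)"
      using sx sy h unfolding z_def pixel_def iv jv by (auto simp: algebra_simps)
    moreover have "(k,l+sy) \<in> {(k1,l1),(k2,l2)}" using nb by auto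
    ultimately show ?thesis by blast
  qed
  then obtain k' l' where kl: "(k',l') \<in> {(k1,l1),(k2,l2)}" and zp: "z \<in> pixel d k' l'" by blast
  have "ball c r \<inter> closure (opix d k' l') \<noteq> {}" using zb zp closure_opix[OF d] by auto
  then have "ball c r \<inter> opix d k' l' \<noteq> {}" using open_Int_closure_eq_empty[OF open_ball] by blast
  then show False using av[OF kl] by blast
qed

end
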